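(* Let $N$ be a finite-dimensional Hilbert space and let $S$ be the operator in $\ell_2(\mathbb{Z},N)$ defined below. A fundamental symmetry $J$ in $\ell_2(\mathbb{Z},N)$ commutes with $S$ if and only if there exist fundamental symmetries $J_-$, $J_+$ in $N$ such that for every $(x_k)_{k\in\mathbb{Z}}\in\ell_2(\mathbb{Z},N)$, $(J(x_k))_k=J_-x_k$ for $k\le 0$ and $(J(x_k))_k=J_+x_k$ for $k\ge 1$.
   Context: Let $A$ be the operator in $\ell_2(\mathbb{Z},N)$ with domain $\mathcal{D}(A)$ consisting of all sequences $f=(f_k)_{k\in\mathbb{Z}}$ of the form $f_k=x_{k-1}-x_k$ with $(x_k)\in\ell_2(\mathbb{Z},N)$, acting by $(Af)_k=i(x_{k-1}+x_k)$. Let $S$ be the restriction of $A$ to the set of those $f\in\mathcal{D}(A)$ for which $x_0=0$. A fundamental symmetry is a bounded operator $J$ with $J=J^*$, $J^2=I$. "$J$ commutes with $S$" means $J\mathcal{D}(S)\subset\mathcal{D}(S)$ and $JSu=SJu$ for all $u\in\mathcal{D}(S)$. *)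

theory Defs
  imports "HOL-Analysis.Analysis"
begin

text \<open>The finite-dimensional complex Hilbert space N is modelled as complex^'n
  with its standard inner product (every finite-dimensional Hilbert space is
  unitarily equivalent to such a space).\<close>

definition cinner :: "complex^'n \<Rightarrow> complex^'n \<Rightarrow> complex" where
  "cinner x y = (\<Sum>i\<in>UNIV. x$i * cnj (y$i))"

definition fsym_N :: "(complex^'n \<Rightarrow> complex^'n) \<Rightarrow> bool" where
  "fsym_N T \<longleftrightarrow>
     (\<forall>x y. T (x + y) = T x + T y) \<and> (\<forall>c x. T (c *s x) = c *s T x) \<and>
     (\<forall>x y. cinner (T x) y = cinner x (T y)) \<and> (\<forall>x. T (T x) = x)"

definition l2 :: "(int \<Rightarrow> complex^'n) set" where
  "l2 = {x. (\<lambda>k. (norm (x k))\<^sup>2) summable_on UNIV}"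

definition l2inner :: "(int \<Rightarrow> complex^'n) \<Rightarrow> (int \<Rightarrow> complex^'n) \<Rightarrow> complex" where
  "l2inner f g = infsum (\<lambda>k. cinner (f k) (g k)) UNIV"

definition l2norm :: "(int \<Rightarrow> complex^'n) \<Rightarrow> real" where
  "l2norm f = sqrt (infsum (\<lambda>k. (norm (f k))\<^sup>2) UNIV)"

definition fsym_l2 :: "((int \<Rightarrow> complex^'n) \<Rightarrow> (int \<Rightarrow> complex^'n)) \<Rightarrow> bool" where
  "fsym_l2 J \<longleftrightarrow>
     (\<forall>f\<in>l2. J f \<in> l2) \<and>
     (\<forall>f\<in>l2. \<forall>g\<in>l2. J (\<lambda>k. f k + g k) = (\<lambda>k. J f k + J g k)) \<and>
     (\<forall>f\<in>l2. \<forall>c. J (\<lambda>k. c *s f k) = (\<lambda>k. c *s J f k)) \<and>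
     (\<exists>C. \<forall>f\<in>l2. l2norm (J f) \<le> C * l2norm f) \<and>
     (\<forall>f\<in>l2. \<forall>g\<in>l2. l2inner (J f) g = l2inner f (J g)) \<and>
     (\<forall>f\<in>l2. J (J f) = f)"

definition diffseq :: "(int \<Rightarrow> complex^'n) \<Rightarrow> (int \<Rightarrow> complex^'n)" where
  "diffseq x = (\<lambda>k. x (k - 1) - x k)"

definition domA :: "(int \<Rightarrow> complex^'n) set" where
  "domA = {f. \<exists>x\<in>l2. f = diffseq x}"

definition opA :: "(int \<Rightarrow> complex^'n) \<Rightarrow> (int \<Rightarrow> complex^'n)" where
  "opA f = (let x = (THE x. x \<in> l2 \<and> f = diffseq x) in (\<lambda>k. \<i> *s (x (k - 1) + x k)))"

definition domS :: "(int \<Rightarrow> complex^'n) set" where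
  "domS = {f. \<exists>x\<in>l2. x 0 = 0 \<and> f = diffseq x}"

definition opS :: "(int \<Rightarrow> complex^'n) \<Rightarrow> (int \<Rightarrow> complex^'n)" where
  "opS f = opA f"

definition commutes_S :: "((int \<Rightarrow> complex^'n) \<Rightarrow> (int \<Rightarrow> complex^'n)) \<Rightarrow> bool" where
  "commutes_S J \<longleftrightarrow> (\<forall>u\<in>domS. J u \<in> domS) \<and> (\<forall>u\<in>domS. J (opS u) = opS (J u))"

end

theory Submission imports Defs begin

definition dl :: "int \<Rightarrow> complex^'n \<Rightarrow> int \<Rightarrow> complex^'n" where
  "dl j v = (\<lambda>m. if m = j then v else 0)"

lemma cinner_add_left: "cinner (x+y) z = cinner x z + cinner y z"
  unfolding cinner_def by (simp add: distrib_right sum.distrib)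
lemma cinner_diff_left: "cinner (x-y) z = cinner x z - cinner y z"
  unfolding cinner_def by (simp add: left_diff_distrib sum_subtractf)
lemma cinner_smult_left: "cinner (c *s x) y = c * cinner x y"
  unfolding cinner_def by (simp add: sum_distrib_left mult.assoc)
lemma cinner_zero_left[simp]: "cinner 0 y = 0"
  unfolding cinner_def by simp
lemma cinner_zero_right[simp]: "cinner x 0 = 0"
  unfolding cinner_def by simp
lemma cinner_self_eq0: "cinner x x = 0 \<Longrightarrow> x = 0"
proof -
  assume a: "cinner x x = 0"
  have e: "\<And>i. x$i * cnj (x$i) = complex_of_real ((cmod (x$i))\<^sup>2)"
    by (metis complex_norm_square of_real_power)
  have "cinner x x = of_real (\<Sum>i\<in>UNIV. (cmod (x$i))\<^sup>2)"
    unfolding cinner_def e of_real_sum by simp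
  then have "complex_of_real (\<Sum>i\<in>UNIV. (cmod (x$i))\<^sup>2) = 0" using a by simp
  then have "(\<Sum>i\<in>UNIV. (cmod (x$i))\<^sup>2) = 0" by (simp only: of_real_eq_0_iff)
  then have "\<forall>i\<in>UNIV. (cmod (x$i))\<^sup>2 = 0"
    by (subst sum_nonneg_eq_0_iff[symmetric]) auto
  then show "x = 0" by (simp add: vec_eq_iff)
qed
lemma cinner_ext: "(\<And>w. cinner a w = cinner b w) \<Longrightarrow> a = b"
proof -
  assume "\<And>w. cinner a w = cinner b w"
  then have "cinner (a - b) (a - b) = 0" by (simp add: cinner_diff_left)
  then show "a = b" using cinner_self_eq0[of "a-b"] by simp
qed

lemma norm_smult_vec: "norm (c *s (v::complex^'n)) = cmod c * norm v"
proof -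
  have "norm (c *s v) = sqrt (\<Sum>i\<in>UNIV. (cmod c)\<^sup>2 * (cmod (v$i))\<^sup>2)"
    unfolding norm_vec_def L2_set_def by (simp add: norm_mult power_mult_distrib)
  also have "\<dots> = sqrt ((cmod c)\<^sup>2 * (\<Sum>i\<in>UNIV. (cmod (v$i))\<^sup>2))"
    by (simp add: sum_distrib_left)
  also have "\<dots> = cmod c * norm v"
    unfolding norm_vec_def L2_set_def by (simp add: real_sqrt_mult)
  finally show ?thesis .
qed

lemma l2_lin:
  assumes "x \<in> l2" "y \<in> l2"
  shows "(\<lambda>k. a *s x k + b *s y k) \<in> l2"
proof -
  have sx: "(\<lambda>k. (norm (x k))\<^sup>2) summable_on UNIV" using assms(1) by (simp add: l2_def)
  have sy: "(\<lambda>k. (norm (y k))\<^sup>2) summable_on UNIV" using assms(2) by (simp add: l2_def)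
  have s: "(\<lambda>k. 2 * (cmod a)\<^sup>2 * (norm (x k))\<^sup>2 + 2 * (cmod b)\<^sup>2 * (norm (y k))\<^sup>2) summable_on UNIV"
    by (intro summable_on_add summable_on_cmult_right sx sy)
  have sq2: "(p + q)\<^sup>2 \<le> 2 * p\<^sup>2 + 2 * q\<^sup>2" for p q :: real
    using zero_le_power2[of "p - q"] by (simp add: power2_eq_square algebra_simps)
  have le: "(norm (a *s x k + b *s y k))\<^sup>2 \<le> 2 * (cmod a)\<^sup>2 * (norm (x k))\<^sup>2 + 2 * (cmod b)\<^sup>2 * (norm (y k))\<^sup>2" for k
  proof -
    have "norm (a *s x k + b *s y k) \<le> cmod a * norm (x k) + cmod b * norm (y k)"
      using norm_triangle_ineq[of "a *s x k" "b *s y k"] by (simp add: norm_smult_vec)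
    then have "(norm (a *s x k + b *s y k))\<^sup>2 \<le> (cmod a * norm (x k) + cmod b * norm (y k))\<^sup>2"
      by (simp add: power_mono)
    also have "\<dots> \<le> 2 * (cmod a * norm (x k))\<^sup>2 + 2 * (cmod b * norm (y k))\<^sup>2"
      using sq2 by blast
    also have "\<dots> = 2 * (cmod a)\<^sup>2 * (norm (x k))\<^sup>2 + 2 * (cmod b)\<^sup>2 * (norm (y k))\<^sup>2"
      by (simp add: power_mult_distrib)
    finally show ?thesis .
  qed
  show ?thesis unfolding l2_def
    by (auto intro!: summable_on_comparison_test[OF s] le)
qed

lemma l2_shift:
  assumes "x \<in> l2" shows "(\<lambda>k. x (k + c)) \<in> l2"
proof -
  have b: "bij_betw (\<lambda>k::int. k + c) UNIV UNIV"
    by (rule bij_betwI[where g="\<lambda>k. k - c"]) auto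
  show ?thesis using assms unfolding l2_def
    using summable_on_reindex_bij_betw[OF b, of "\<lambda>k. (norm (x k))\<^sup>2"] by simp
qed

lemma l2_dl: "dl j v \<in> l2"
  unfolding l2_def dl_def mem_Collect_eq
  by (rule finite_nonzero_values_imp_summable_on) (rule finite_subset[of _ "{j}"], auto)

lemma l2inner_dl_right: "l2inner f (dl j w) = cinner (f j) w"
  unfolding l2inner_def dl_def
  by (subst infsum_cong_neutral[where T="{j}" and g="\<lambda>_. cinner (f j) w"]) auto

lemma l2inner_dl_left: "l2inner (dl j w) g = cinner w (g j)"
  unfolding l2inner_def dl_def
  by (subst infsum_cong_neutral[where T="{j}" and g="\<lambda>_. cinner w (g j)"]) auto

lemma J_lin:
  assumes "fsym_l2 J" "f \<in> l2" "g \<in> l2"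
  shows "J (\<lambda>k. a *s f k + b *s g k) = (\<lambda>k. a *s J f k + b *s J g k)"
proof -
  have "(\<lambda>k. a *s f k) \<in> l2" using l2_lin[OF assms(2,3), of a 0] by simp
  moreover have "(\<lambda>k. b *s g k) \<in> l2" using l2_lin[OF assms(2,3), of 0 b] by simp
  ultimately show ?thesis using assms unfolding fsym_l2_def by simp
qed


lemma l2_minus: "x \<in> l2 \<Longrightarrow> y \<in> l2 \<Longrightarrow> (\<lambda>k. x k - y k) \<in> l2"
  using l2_lin[of x y 1 "-1"] by simp

lemma const_zero:
  fixes d :: "int \<Rightarrow> complex^'n"
  assumes "d \<in> l2" "\<And>k. d (k - 1) = d k"
  shows "d = (\<lambda>_. 0)"
proof -
  have up: "d (int n) = d 0" for n
  proof (induction n)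
    case (Suc n)
    have e: "int (Suc n) - 1 = int n" by simp
    have "d (int (Suc n)) = d (int (Suc n) - 1)" using assms(2)[of "int (Suc n)"] by metis
    then show ?case using Suc unfolding e by metis
  qed simp
  have dn: "d (- int n) = d 0" for n
  proof (induction n)
    case (Suc n)
    have e: "- int (Suc n) = - int n - 1" by simp
    show ?case using assms(2)[of "- int n"] Suc unfolding e by metis
  qed simp
  have c: "d k = d 0" for k
  proof (cases "k \<ge> 0")
    case True then show ?thesis using up[of "nat k"] by simp
  next
    case False then show ?thesis using dn[of "nat (-k)"] by simp
  qed
  show ?thesis
  proof (rule ccontr)
    assume "d \<noteq> (\<lambda>_. 0)"
    then have "d 0 \<noteq> 0" using c by auto
    then have "(norm (d 0))\<^sup>2 \<noteq> 0" by simp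
    moreover have "(\<lambda>_::int. (norm (d 0))\<^sup>2) summable_on UNIV"
    proof -
      have "(\<lambda>k. (norm (d k))\<^sup>2) = (\<lambda>_::int. (norm (d 0))\<^sup>2)" using c by metis
      then show ?thesis using assms(1) unfolding l2_def by simp
    qed
    ultimately show False using infsum_diverge_constant[of "UNIV::int set" "(norm (d 0))\<^sup>2"]
      by (simp add: infinite_UNIV_int)
  qed
qed

lemma diffseq_unique:
  assumes "x \<in> l2" "y \<in> l2" "diffseq x = diffseq y" shows "x = y"
proof -
  have h: "(\<lambda>k. x k - y k) = (\<lambda>_. 0)"
  proof (rule const_zero)
    show "(\<lambda>k. x k - y k) \<in> l2" using l2_minus assms by blast
    fix k
    have "x (k-1) - x k = y (k-1) - y k" using fun_cong[OF assms(3), of k] unfolding diffseq_def by simp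
    then show "x (k - 1) - y (k - 1) = x k - y k" by (simp add: algebra_simps)
  qed
  show ?thesis
  proof
    fix k show "x k = y k" using fun_cong[OF h, of k] by simp
  qed
qed

lemma opA_eq:
  assumes "x \<in> l2" shows "opA (diffseq x) = (\<lambda>k. \<i> *s (x (k - 1) + x k))"
proof -
  have "(THE z. z \<in> l2 \<and> diffseq x = diffseq z) = x"
  proof (rule the_equality)
    show "x \<in> l2 \<and> diffseq x = diffseq x" using assms by simp
    fix z assume "z \<in> l2 \<and> diffseq x = diffseq z"
    then show "z = x" using diffseq_unique[OF assms, of z] by simp
  qed
  then show ?thesis unfolding opA_def by simp
qed

lemma l2_sh: "x \<in> l2 \<Longrightarrow> (\<lambda>k. x (k - 1)) \<in> l2"
  using l2_shift[of x "-1"] by simp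

lemma diffseq_l2: "x \<in> l2 \<Longrightarrow> diffseq x \<in> l2"
  unfolding diffseq_def using l2_minus[OF l2_sh] by blast

lemma opA_l2: "x \<in> l2 \<Longrightarrow> (\<lambda>k. \<i> *s (x (k - 1) + x k)) \<in> l2"
  using l2_lin[OF l2_sh, of x x "\<i>" "\<i>"] by (simp add: vector_add_ldistrib)


lemma fsymN_zero: "fsym_N T \<Longrightarrow> T 0 = 0"
  unfolding fsym_N_def by (metis add_cancel_right_right add.right_neutral)
lemma fsymN_diff: "fsym_N T \<Longrightarrow> T (a - b) = T a - T b"
  unfolding fsym_N_def by (metis add_diff_cancel diff_add_cancel)
lemma fsymN_add: "fsym_N T \<Longrightarrow> T (a + b) = T a + T b"
  unfolding fsym_N_def by blast
lemma fsymN_smult: "fsym_N T \<Longrightarrow> T (c *s a) = c *s T a"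
  unfolding fsym_N_def by blast

lemma if_dir:
  fixes J :: "(int \<Rightarrow> complex^'n) \<Rightarrow> (int \<Rightarrow> complex^'n)"
  assumes J: "fsym_l2 J" and m: "fsym_N Jm" and p: "fsym_N Jp"
    and F: "\<forall>x\<in>l2. \<forall>k. J x k = (if k \<le> 0 then Jm (x k) else Jp (x k))"
  shows "commutes_S J"
proof -
  define B where "B = (\<lambda>k::int. if k \<le> 0 then Jm else Jp)"
  have Bf: "fsym_N (B k)" for k using m p unfolding B_def by simp
  have FB: "J x k = B k (x k)" if "x \<in> l2" for x k using F that unfolding B_def by simp
  have main: "J u \<in> domS \<and> J (opS u) = opS (J u)" if "u \<in> domS" for u
  proof -
    obtain x where x: "x \<in> l2" "x 0 = 0" "u = diffseq x" using \<open>u \<in> domS\<close> unfolding domS_def by auto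
    have hB: "B k (x (k-1)) = B (k-1) (x (k-1))" for k
    proof (cases "k = 1")
      case True
      then show ?thesis using x(2) fsymN_zero[OF Bf] by simp
    next
      case False
      then have "B k = B (k - 1)" unfolding B_def by simp
      then show ?thesis by simp
    qed
    define y where "y = J x"
    have y: "y \<in> l2" using J x(1) unfolding y_def fsym_l2_def by blast
    have yk: "y k = B k (x k)" for k using FB x(1) unfolding y_def by blast
    have y0: "y 0 = 0" unfolding yk using x(2) fsymN_zero[OF Bf] by simp
    have ul2: "u \<in> l2" using x diffseq_l2 by blast
    have Ju: "J u = diffseq y"
    proof
      fix k
      have "J u k = B k (x (k-1) - x k)" using FB[OF ul2] x(3) unfolding diffseq_def by simp
      also have "\<dots> = B k (x (k-1)) - B k (x k)" using fsymN_diff[OF Bf] by simp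
      also have "\<dots> = diffseq y k" unfolding diffseq_def yk hB ..
      finally show "J u k = diffseq y k" .
    qed
    have "J u \<in> domS" unfolding domS_def using Ju y y0 by blast
    moreover have "J (opS u) = opS (J u)"
    proof
      fix k
      have opu: "opS u = (\<lambda>k. \<i> *s (x (k - 1) + x k))" unfolding opS_def x(3) using opA_eq x(1) by blast
      have "J (opS u) k = B k (\<i> *s (x (k - 1) + x k))"
        using FB[OF opA_l2[OF x(1)]] unfolding opu by simp
      also have "\<dots> = \<i> *s (B k (x (k - 1)) + B k (x k))"
        using fsymN_add[OF Bf] fsymN_smult[OF Bf] by simp
      also have "\<dots> = \<i> *s (y (k - 1) + y k)" unfolding yk hB ..
      also have "\<dots> = opS (J u) k" unfolding opS_def Ju opA_eq[OF y] by simp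
      finally show "J (opS u) k = opS (J u) k" .
    qed
    ultimately show ?thesis by blast
  qed
  then show ?thesis unfolding commutes_S_def by blast
qed

lemma K:
  fixes J :: "(int \<Rightarrow> complex^'n) \<Rightarrow> (int \<Rightarrow> complex^'n)"
  assumes J: "fsym_l2 J" and C: "commutes_S J" and x: "x \<in> l2" "x 0 = 0"
  shows "J x 0 = 0 \<and> J (\<lambda>k. x (k - 1)) = (\<lambda>k. J x (k - 1))"
proof -
  define u where "u = diffseq x"
  have uS: "u \<in> domS" unfolding u_def domS_def using x by blast
  then obtain y where y: "y \<in> l2" "y 0 = 0" "J u = diffseq y" using C unfolding commutes_S_def domS_def by blast
  define s where "s = (\<lambda>k. \<i> *s (x (k - 1) + x k))"
  have s: "opS u = s" unfolding opS_def u_def s_def using opA_eq x(1) by blast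
  have Js: "J s = (\<lambda>k. \<i> *s (y (k - 1) + y k))"
    using C uS y(3) s opA_eq[OF y(1)] unfolding commutes_S_def opS_def by metis
  have sl2: "s \<in> l2" unfolding s_def using opA_l2 x(1) .
  have ul2: "u \<in> l2" unfolding u_def using diffseq_l2 x(1) .
  have xe: "x = (\<lambda>k. (-\<i>/2) *s s k + (-1/2) *s u k)"
    unfolding s_def u_def diffseq_def by (auto simp: vec_eq_iff field_simps)
  have she: "(\<lambda>k. x (k - 1)) = (\<lambda>k. (-\<i>/2) *s s k + (1/2) *s u k)"
    unfolding s_def u_def diffseq_def by (auto simp: vec_eq_iff field_simps)
  have "J x = (\<lambda>k. (-\<i>/2) *s J s k + (-1/2) *s J u k)"
    by (subst xe, rule J_lin[OF J sl2 ul2])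
  also have "\<dots> = y" unfolding Js y(3) diffseq_def by (auto simp: vec_eq_iff field_simps)
  finally have Jx: "J x = y" .
  have "J (\<lambda>k. x (k - 1)) = (\<lambda>k. (-\<i>/2) *s J s k + (1/2) *s J u k)"
    by (subst she, rule J_lin[OF J sl2 ul2])
  also have "\<dots> = (\<lambda>k. y (k - 1))" unfolding Js y(3) diffseq_def by (auto simp: vec_eq_iff field_simps)
  finally show ?thesis using Jx y(2) by simp
qed


lemma K1:
  fixes J :: "(int \<Rightarrow> complex^'n) \<Rightarrow> (int \<Rightarrow> complex^'n)"
  assumes J: "fsym_l2 J" and C: "commutes_S J" and x: "x \<in> l2" "x 1 = 0"
  shows "J x 1 = 0"
proof -
  define x' where "x' = (\<lambda>k. x (k + 1))"
  have x': "x' \<in> l2" "x' 0 = 0" unfolding x'_def using l2_shift x by auto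
  have e: "(\<lambda>k. x' (k - 1)) = x" unfolding x'_def by simp
  have "J x = (\<lambda>k. J x' (k - 1))" using K[OF J C x'] unfolding e by blast
  then have "J x 1 = J x' 0" by simp
  then show ?thesis using K[OF J C x'] by simp
qed

lemma support:
  fixes J :: "(int \<Rightarrow> complex^'n) \<Rightarrow> (int \<Rightarrow> complex^'n)"
  assumes J: "fsym_l2 J" and P: "\<forall>x\<in>l2. x j = 0 \<longrightarrow> J x j = 0"
  shows "J (dl j v) = dl j (J (dl j v) j)"
proof
  fix m
  show "J (dl j v) m = dl j (J (dl j v) j) m"
  proof (cases "m = j")
    case True then show ?thesis by (simp add: dl_def)
  next
    case False
    define w where "w = J (dl j v) m"
    have "cinner w w = l2inner (J (dl j v)) (dl m w)" by (simp add: l2inner_dl_right w_def)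
    also have "\<dots> = l2inner (dl j v) (J (dl m w))" using J l2_dl unfolding fsym_l2_def by blast
    also have "\<dots> = cinner v (J (dl m w) j)" by (simp add: l2inner_dl_left)
    also have "J (dl m w) j = 0"
    proof -
      have "dl m w j = 0" using False by (simp add: dl_def)
      then show ?thesis using P l2_dl[of m w] by blast
    qed
    finally have "w = 0" using cinner_self_eq0 by simp
    then show ?thesis using False by (simp add: w_def dl_def)
  qed
qed

lemma shift_dl:
  fixes J :: "(int \<Rightarrow> complex^'n) \<Rightarrow> (int \<Rightarrow> complex^'n)"
  assumes J: "fsym_l2 J" and C: "commutes_S J" and k: "k \<noteq> 0"
  shows "J (dl (k + 1) v) = (\<lambda>m. J (dl k v) (m - 1))"
proof -
  have e: "(\<lambda>m. dl k v (m - 1)) = dl (k + 1) v" by (auto simp: dl_def)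
  have "dl k v 0 = 0" using k by (simp add: dl_def)
  then have "J (\<lambda>m. dl k v (m - 1)) = (\<lambda>m. J (dl k v) (m - 1))" using K[OF J C l2_dl] by blast
  then show ?thesis unfolding e .
qed

lemma J_dl:
  fixes J :: "(int \<Rightarrow> complex^'n) \<Rightarrow> (int \<Rightarrow> complex^'n)"
  assumes J: "fsym_l2 J" and C: "commutes_S J"
  shows "J (dl k v) = dl k ((if k \<le> 0 then (\<lambda>v. J (dl 0 v) 0) else (\<lambda>v. J (dl 1 v) 1)) v)"
proof -
  have P0: "\<forall>x\<in>l2. x 0 = 0 \<longrightarrow> J x 0 = 0" using K[OF J C] by blast
  have P1: "\<forall>x\<in>l2. x 1 = 0 \<longrightarrow> J x 1 = 0" using K1[OF J C] by blast
  have up: "J (dl (1 + int n) v) = dl (1 + int n) (J (dl 1 v) 1)" for n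
  proof (induction n)
    case 0 show ?case by (simp only: of_nat_0 add_0_right) (rule support[OF J P1])
  next
    case (Suc n)
    have "J (dl (1 + int (Suc n)) v) = J (dl ((1 + int n) + 1) v)" by (simp add: add.commute)
    also have "\<dots> = (\<lambda>m. J (dl (1 + int n) v) (m - 1))" by (rule shift_dl[OF J C]) simp
    also have "\<dots> = dl (1 + int (Suc n)) (J (dl 1 v) 1)" unfolding Suc by (auto simp: dl_def)
    finally show ?case .
  qed
  have dn: "J (dl (- int n) v) = dl (- int n) (J (dl 0 v) 0)" for n
  proof (induction n)
    case 0 show ?case by (simp only: of_nat_0 minus_zero) (rule support[OF J P0])
  next
    case (Suc n)
    have "J (dl (- int n) v) = J (dl ((- int (Suc n)) + 1) v)" by simp
    also have "\<dots> = (\<lambda>m. J (dl (- int (Suc n)) v) (m - 1))" by (rule shift_dl[OF J C]) simp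
    finally have e: "J (dl (- int n) v) = (\<lambda>m. J (dl (- int (Suc n)) v) (m - 1))" .
    show ?case
    proof
      fix m
      have "J (dl (- int (Suc n)) v) m = J (dl (- int n) v) (m + 1)" using fun_cong[OF e, of "m+1"] by simp
      then show "J (dl (- int (Suc n)) v) m = dl (- int (Suc n)) (J (dl 0 v) 0) m"
        unfolding Suc by (auto simp: dl_def)
    qed
  qed
  show ?thesis
  proof (cases "k \<le> 0")
    case True then show ?thesis using dn[of "nat (-k)"] by simp
  next
    case False then show ?thesis using up[of "nat (k - 1)"] by simp
  qed
qed


lemma block:
  fixes J :: "(int \<Rightarrow> complex^'n) \<Rightarrow> (int \<Rightarrow> complex^'n)"
  assumes J: "fsym_l2 J" and T: "\<And>v. J (dl k v) = dl k (T v)"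
  shows "fsym_N T \<and> (\<forall>x\<in>l2. J x k = T (x k))"
proof -
  have Tv: "T v = J (dl k v) k" for v using T by (simp add: dl_def)
  have sa: "cinner (T v) w = cinner v (T w)" for v w
  proof -
    have "cinner (T v) w = l2inner (J (dl k v)) (dl k w)" by (simp add: l2inner_dl_right Tv)
    also have "\<dots> = l2inner (dl k v) (J (dl k w))" using J l2_dl unfolding fsym_l2_def by blast
    also have "\<dots> = cinner v (T w)" by (simp add: l2inner_dl_left Tv)
    finally show ?thesis .
  qed
  have add: "T (v + w) = T v + T w" for v w
  proof -
    have "dl k (v + w) = (\<lambda>m. 1 *s dl k v m + 1 *s dl k w m)" by (auto simp: dl_def)
    then show ?thesis unfolding Tv using J_lin[OF J l2_dl l2_dl, of 1 k v 1 k w] by simp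
  qed
  have sm: "T (c *s v) = c *s T v" for c v
  proof -
    have "dl k (c *s v) = (\<lambda>m. c *s dl k v m + 0 *s dl k v m)" by (auto simp: dl_def)
    then show ?thesis unfolding Tv using J_lin[OF J l2_dl l2_dl, of c k v 0 k v] by simp
  qed
  have inv: "T (T v) = v" for v
  proof -
    have "J (J (dl k v)) = dl k v" using J l2_dl unfolding fsym_l2_def by blast
    then have "dl k (T (T v)) = dl k v" unfolding T .
    then show ?thesis by (metis dl_def)
  qed
  have F: "J x k = T (x k)" if "x \<in> l2" for x
  proof (rule cinner_ext)
    fix w
    have "cinner (J x k) w = l2inner (J x) (dl k w)" by (simp add: l2inner_dl_right)
    also have "\<dots> = l2inner x (J (dl k w))" using J l2_dl that unfolding fsym_l2_def by blast
    also have "\<dots> = cinner (x k) (T w)" unfolding T by (simp add: l2inner_dl_right)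
    also have "\<dots> = cinner (T (x k)) w" using sa by simp
    finally show "cinner (J x k) w = cinner (T (x k)) w" .
  qed
  show ?thesis unfolding fsym_N_def using add sm sa inv F by blast
qed

theorem lemma3p2:
  fixes J :: "(int \<Rightarrow> complex^'n) \<Rightarrow> (int \<Rightarrow> complex^'n)"
  assumes "fsym_l2 J"
  shows "commutes_S J \<longleftrightarrow>
    (\<exists>Jm Jp :: complex^'n \<Rightarrow> complex^'n. fsym_N Jm \<and> fsym_N Jp \<and>
       (\<forall>x\<in>l2. \<forall>k. J x k = (if k \<le> 0 then Jm (x k) else Jp (x k))))"
proof
  assume C: "commutes_S J"
  define Jm where "Jm = (\<lambda>v. J (dl 0 v) 0)"
  define Jp where "Jp = (\<lambda>v. J (dl 1 v) 1)"
  have bm: "k \<le> 0 \<Longrightarrow> fsym_N Jm \<and> (\<forall>x\<in>l2. J x k = Jm (x k))" for k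
    using block[OF assms, of k Jm] J_dl[OF assms C, of k] unfolding Jm_def by simp
  have bp: "\<not> k \<le> 0 \<Longrightarrow> fsym_N Jp \<and> (\<forall>x\<in>l2. J x k = Jp (x k))" for k
    using block[OF assms, of k Jp] J_dl[OF assms C, of k] unfolding Jp_def by simp
  have "fsym_N Jm" using bm[of 0] by simp
  moreover have "fsym_N Jp" using bp[of 1] by simp
  moreover have "\<forall>x\<in>l2. \<forall>k. J x k = (if k \<le> 0 then Jm (x k) else Jp (x k))"
    using bm bp by auto
  ultimately show "\<exists>Jm Jp :: complex^'n \<Rightarrow> complex^'n. fsym_N Jm \<and> fsym_N Jp \<and>
       (\<forall>x\<in>l2. \<forall>k. J x k = (if k \<le> 0 then Jm (x k) else Jp (x k)))" by blast
next
  assume "\<exists>Jm Jp :: complex^'n \<Rightarrow> complex^'n. fsym_N Jm \<and> fsym_N Jp \<and>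
       (\<forall>x\<in>l2. \<forall>k. J x k = (if k \<le> 0 then Jm (x k) else Jp (x k)))"
  then show "commutes_S J" using if_dir[OF assms] by blast
qed

end
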